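(* Consider problem (VP) under the standing assumptions at $\bar x\in Q_0$. Let $\bar x$ be a local Geoffrion properly efficient solution of (VP), and suppose $L^2(Q;\bar x,u)\subset T^2(Q_0;\bar x,u)$ for every critical direction $u\in\mathcal{C}(\bar x)$. Then there is no pair $(u,v)\in X\times X$ such that $F_i^2(\bar x;u,v)\leqq_{\rm lex}(0,0)$ for all $i\in I$, $F_i^2(\bar x;u,v)<_{\rm lex}(0,0)$ for at least one $i\in I(\bar x;u)$, and $G_j^2(\bar x;u,v)\leqq_{\rm lex}(0,0)$ for all $j\in J(\bar x)$.
   Context: Standing setting: $X$ is a Banach space; $I=\{1,\dots,p\}$, $J=\{1,\dots,m\}$; $f_i,g_j\colon X\to\mathbb{R}$; (VP) minimizes $f=(f_1,\dots,f_p)$ over $Q_0:=\{x\in X: g_j(x)\leqq 0,\ j\in J\}$. $J(\bar x):=\{j\in J: g_j(\bar x)=0\}$. Standing assumptions: $f_i$ ($i\in I$), $g_j$ ($j\in J(\bar x)$) locally Lipschitz at $\bar x$; $g_j$ ($j\notin J(\bar x)$) continuous at $\bar x$. $F^{\circ}(\bar x,u):=\limsup_{x\to\bar x,\,t\downarrow0}\frac{F(x+tu)-F(x)}{t}$; $F^{\circ\circ}(\bar x,u):=\limsup_{t\downarrow0}\frac{F(\bar x+tu)-F(\bar x)-tF^{\circ}(\bar x,u)}{\frac12t^2}$. Lexicographic order on $\mathbb{R}^2$: $a\leqq_{\rm lex}b$ iff $a_1<b_1$ or ($a_1=b_1$, $a_2\leqq b_2$); $a<_{\rm lex}b$ iff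 $a_1<b_1$ or ($a_1=b_1$, $a_2<b_2$). $F_i^2(\bar x;u,v):=(f_i^{\circ}(\bar x,u),\, f_i^{\circ}(\bar x,v)+f_i^{\circ\circ}(\bar x,u))$, $G_j^2(\bar x;u,v):=(g_j^{\circ}(\bar x,u),\, g_j^{\circ}(\bar x,v)+g_j^{\circ\circ}(\bar x,u))$; $I(\bar x;u):=\{i\in I: f_i^{\circ}(\bar x,u)=0\}$. $Q:=Q_0\cap\{x: f_i(x)\leqq f_i(\bar x),\ i\in I\}$; $L^2(Q;\bar x,u):=\{v: F_i^2(\bar x;u,v)\leqq_{\rm lex}(0,0)\ \forall i\in I,\ G_j^2(\bar x;u,v)\leqq_{\rm lex}(0,0)\ \forall j\in J(\bar x)\}$. $T^2(\Omega;\bar x,u):=\{v: \exists t_k\downarrow0,\ \exists v^k\to v,\ \bar x+t_ku+\frac12t_k^2v^k\in\Omega\ \forall k\}$. Critical direction: $u$ with $f_i^{\circ}(\bar x,u)\leqq0$ for all $i$, $=0$ for some $i$, and $g_j^{\circ}(\bar x,u)\leqq0$ for all $j\in J(\bar x)$; $\mathcal{C}(\bar x)$ is the set of these. Local Geoffrion properly efficient solution: there is a neighborhood $U$ of $\bar x$ such that (a) no $x\in U\cap Q_0$ has $f(x)\leqq f(\bar x)$ componentwise with $f(x)\ne f(\bar x)$, and (b) there is $M>0$ such that for every $i\in I$ and every $x\in U\cap Q_0$ with $f_i(x)<f_i(\bar x)$ there exists $j\in I$ with $f_j(x)>f_j(\bar x)$ and $\frac{f_i(\bar x)-f_i(x)}{f_j(x)-f_j(\bar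 x)}\leqq M$. *)

theory Defs
  imports "HOL-Analysis.Analysis" "HOL-Library.Extended_Real"
begin

definition loc_lipschitz_at :: "('a::metric_space \<Rightarrow> real) \<Rightarrow> 'a \<Rightarrow> bool" where
  "loc_lipschitz_at F x \<longleftrightarrow> (\<exists>U L. open U \<and> x \<in> U \<and> L-lipschitz_on U F)"

definition clarke_dd :: "('a::real_normed_vector \<Rightarrow> real) \<Rightarrow> 'a \<Rightarrow> 'a \<Rightarrow> ereal" where
  "clarke_dd F x u = Limsup (nhds x \<times>\<^sub>F at_right 0)
      (\<lambda>(y, t). ereal ((F (y + t *\<^sub>R u) - F y) / t))"

text \<open>Second-order upper derivative; uses the (finite, under local Lipschitz) value of clarke_dd.\<close>
definition clarke_dd2 :: "('a::real_normed_vector \<Rightarrow> real) \<Rightarrow> 'a \<Rightarrow> 'a \<Rightarrow> ereal" where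
  "clarke_dd2 F x u = Limsup (at_right 0)
      (\<lambda>t. ereal ((F (x + t *\<^sub>R u) - F x - t * real_of_ereal (clarke_dd F x u)) / ((1/2) * t^2)))"

definition lex_le :: "ereal \<times> ereal \<Rightarrow> ereal \<times> ereal \<Rightarrow> bool" where
  "lex_le a b \<longleftrightarrow> fst a < fst b \<or> (fst a = fst b \<and> snd a \<le> snd b)"

definition lex_lt :: "ereal \<times> ereal \<Rightarrow> ereal \<times> ereal \<Rightarrow> bool" where
  "lex_lt a b \<longleftrightarrow> fst a < fst b \<or> (fst a = fst b \<and> snd a < snd b)"

definition second_pair :: "('a::real_normed_vector \<Rightarrow> real) \<Rightarrow> 'a \<Rightarrow> 'a \<Rightarrow> 'a \<Rightarrow> ereal \<times> ereal" where
  "second_pair F x u v = (clarke_dd F x u, clarke_dd F x v + clarke_dd2 F x u)"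

definition feasible_set :: "nat \<Rightarrow> (nat \<Rightarrow> 'a \<Rightarrow> real) \<Rightarrow> 'a set" where
  "feasible_set m g = {x. \<forall>j\<in>{1..m}. g j x \<le> 0}"

definition active_set :: "nat \<Rightarrow> (nat \<Rightarrow> 'a \<Rightarrow> real) \<Rightarrow> 'a \<Rightarrow> nat set" where
  "active_set m g xb = {j\<in>{1..m}. g j xb = 0}"

definition level_set :: "nat \<Rightarrow> (nat \<Rightarrow> 'a \<Rightarrow> real) \<Rightarrow> nat \<Rightarrow> (nat \<Rightarrow> 'a \<Rightarrow> real) \<Rightarrow> 'a \<Rightarrow> 'a set" where
  "level_set p f m g xb = feasible_set m g \<inter> {x. \<forall>i\<in>{1..p}. f i x \<le> f i xb}"

definition L2_set :: "nat \<Rightarrow> (nat \<Rightarrow> 'a::real_normed_vector \<Rightarrow> real) \<Rightarrow> nat \<Rightarrow> (nat \<Rightarrow> 'a \<Rightarrow> real) \<Rightarrow> 'a \<Rightarrow> 'a \<Rightarrow> 'a set" where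
  "L2_set p f m g xb u = {v. (\<forall>i\<in>{1..p}. lex_le (second_pair (f i) xb u v) (0, 0)) \<and>
      (\<forall>j\<in>active_set m g xb. lex_le (second_pair (g j) xb u v) (0, 0))}"

definition T2_set :: "'a::real_normed_vector set \<Rightarrow> 'a \<Rightarrow> 'a \<Rightarrow> 'a set" where
  "T2_set \<Omega> xb u = {v. \<exists>t w. (\<forall>k. t k > 0) \<and> t \<longlonglongrightarrow> 0 \<and> w \<longlonglongrightarrow> v \<and>
      (\<forall>k. xb + t k *\<^sub>R u + ((1/2) * (t k)^2) *\<^sub>R w k \<in> \<Omega>)}"

definition active_obj :: "nat \<Rightarrow> (nat \<Rightarrow> 'a::real_normed_vector \<Rightarrow> real) \<Rightarrow> 'a \<Rightarrow> 'a \<Rightarrow> nat set" where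
  "active_obj p f xb u = {i\<in>{1..p}. clarke_dd (f i) xb u = 0}"

definition critical_dirs :: "nat \<Rightarrow> (nat \<Rightarrow> 'a::real_normed_vector \<Rightarrow> real) \<Rightarrow> nat \<Rightarrow> (nat \<Rightarrow> 'a \<Rightarrow> real) \<Rightarrow> 'a \<Rightarrow> 'a set" where
  "critical_dirs p f m g xb = {u. (\<forall>i\<in>{1..p}. clarke_dd (f i) xb u \<le> 0) \<and>
      (\<exists>i\<in>{1..p}. clarke_dd (f i) xb u = 0) \<and>
      (\<forall>j\<in>active_set m g xb. clarke_dd (g j) xb u \<le> 0)}"

definition local_geoffrion :: "nat \<Rightarrow> (nat \<Rightarrow> 'a::topological_space \<Rightarrow> real) \<Rightarrow> nat \<Rightarrow> (nat \<Rightarrow> 'a \<Rightarrow> real) \<Rightarrow> 'a \<Rightarrow> bool" where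
  "local_geoffrion p f m g xb \<longleftrightarrow> (\<exists>U. open U \<and> xb \<in> U \<and>
     (\<not> (\<exists>x\<in>U \<inter> feasible_set m g. (\<forall>i\<in>{1..p}. f i x \<le> f i xb) \<and> (\<exists>i\<in>{1..p}. f i x \<noteq> f i xb))) \<and>
     (\<exists>M>0. \<forall>i\<in>{1..p}. \<forall>x\<in>U \<inter> feasible_set m g. f i x < f i xb \<longrightarrow>
        (\<exists>j\<in>{1..p}. f j x > f j xb \<and> (f i xb - f i x) / (f j x - f j xb) \<le> M)))"

end

theory Submission
  imports Defs
begin

lemma ereal_split:
  assumes "A + B < ereal c"
  shows "\<exists>a b. A < ereal a \<and> B < ereal b \<and> a + b < c"
proof (cases A)
  case (real x)
  show ?thesis
  proof (cases B)
    case (real y)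
    then show ?thesis using assms \<open>A = ereal x\<close>
      apply (rule_tac x="x + (c-x-y)/3" in exI, rule_tac x="y + (c-x-y)/3" in exI) by (auto simp: field_simps)
  next
    case PInf then show ?thesis using assms \<open>A = ereal x\<close> by simp
  next
    case MInf then show ?thesis using assms \<open>A = ereal x\<close>
      apply (rule_tac x="x + 1" in exI, rule_tac x="c - x - 2" in exI) by (auto simp: field_simps)
  qed
next
  case PInf then show ?thesis using assms by simp
next
  case MInf
  show ?thesis
  proof (cases B)
    case (real y)
    then show ?thesis using assms \<open>A = -\<infinity>\<close>
      apply (rule_tac x="c - y - 2" in exI, rule_tac x="y + 1" in exI) by (auto simp: field_simps)
  next
    case PInf then show ?thesis using assms \<open>A = -\<infinity>\<close> by simp
  next
    case MInf then show ?thesis using assms \<open>A = -\<infinity>\<close>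
      apply (rule_tac x="c/2 - 1" in exI, rule_tac x="c/2 - 1" in exI) by (auto simp: field_simps)
  qed
qed

lemma seq_facts:
  fixes t :: "nat \<Rightarrow> real"
  assumes tpos: "\<forall>k. t k > 0" and t0: "t \<longlonglongrightarrow> 0"
  shows "filterlim t (at_right 0) sequentially"
    and "filterlim (\<lambda>k. (1/2) * (t k)^2) (at_right 0) sequentially"
proof -
  show "filterlim t (at_right 0) sequentially"
    using tendsto_imp_filterlim_at_right[OF t0] tpos by auto
  have "(\<lambda>k. (1/2) * (t k)^2) \<longlonglongrightarrow> (1/2) * 0^2"
    by (intro tendsto_intros t0)
  then have lim: "(\<lambda>k. (1/2) * (t k)^2) \<longlonglongrightarrow> 0" by simp
  have ev: "eventually (\<lambda>k. (1/2) * (t k)^2 > 0) sequentially" using tpos by (intro always_eventually) (metis less_irrefl zero_less_power2 mult_pos_pos zero_less_divide_1_iff zero_less_numeral)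
  show "filterlim (\<lambda>k. (1/2) * (t k)^2) (at_right 0) sequentially"
    using tendsto_imp_filterlim_at_right[OF lim ev] .
qed

lemma core:
  fixes F :: "'a::real_normed_vector \<Rightarrow> real"
  assumes lip: "loc_lipschitz_at F xb" and tpos: "\<forall>k. t k > 0" and t0: "t \<longlonglongrightarrow> 0"
    and wv: "w \<longlonglongrightarrow> v"
    and u0: "clarke_dd F xb u = 0"
    and sum: "clarke_dd F xb v + clarke_dd2 F xb u < ereal c"
  shows "eventually (\<lambda>k. F (xb + t k *\<^sub>R u + ((1/2)*(t k)^2) *\<^sub>R w k) - F xb \<le> c/2 * (t k)^2) sequentially"
proof -
  obtain U L where U: "open U" "xb \<in> U" and L: "L-lipschitz_on U F"
    using lip unfolding loc_lipschitz_at_def by blast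
  have L0: "0 \<le> L" using L lipschitz_on_nonneg by blast
  obtain a b where a: "clarke_dd F xb v < ereal a" and b: "clarke_dd2 F xb u < ereal b"
    and ab: "a + b < c" using ereal_split[OF sum] by blast
  define s where "s k = (1/2) * (t k)^2" for k
  have spos: "s k > 0" for k using tpos[rule_format, of k] by (simp add: s_def)
  have tr: "filterlim t (at_right 0) sequentially" using seq_facts tpos t0 by blast
  have sr: "filterlim s (at_right 0) sequentially" using seq_facts(2)[OF tpos t0] unfolding s_def .
  have s0: "s \<longlonglongrightarrow> 0" using sr by (simp add: filterlim_at)
  have yk: "(\<lambda>k. xb + t k *\<^sub>R u) \<longlonglongrightarrow> xb"
    using tendsto_add[OF tendsto_const tendsto_scaleR[OF t0 tendsto_const], of xb u] by simp
  have zk: "(\<lambda>k. xb + t k *\<^sub>R u + s k *\<^sub>R v) \<longlonglongrightarrow> xb"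
    using tendsto_add[OF yk tendsto_scaleR[OF s0 tendsto_const], of v] by simp
  have xk: "(\<lambda>k. xb + t k *\<^sub>R u + s k *\<^sub>R w k) \<longlonglongrightarrow> xb"
    using tendsto_add[OF yk tendsto_scaleR[OF s0 wv]] by simp
  have eyU: "eventually (\<lambda>k. xb + t k *\<^sub>R u \<in> U) sequentially" using yk U topological_tendstoD by blast
  have ezU: "eventually (\<lambda>k. xb + t k *\<^sub>R u + s k *\<^sub>R v \<in> U) sequentially" using zk U topological_tendstoD by blast
  have exU: "eventually (\<lambda>k. xb + t k *\<^sub>R u + s k *\<^sub>R w k \<in> U) sequentially" using xk U topological_tendstoD by blast
  have e2f: "eventually (\<lambda>p. (F (fst p + snd p *\<^sub>R v) - F (fst p)) / snd p < a) (nhds xb \<times>\<^sub>F at_right 0)"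
    using Limsup_lessD[OF a[unfolded clarke_dd_def]] by (simp add: case_prod_beta)
  have fl2: "filterlim (\<lambda>k. (xb + t k *\<^sub>R u, s k)) (nhds xb \<times>\<^sub>F at_right 0) sequentially"
    by (rule filterlim_Pair[OF yk sr])
  have e2: "eventually (\<lambda>k. (F (xb + t k *\<^sub>R u + s k *\<^sub>R v) - F (xb + t k *\<^sub>R u))/s k < a) sequentially"
    using fl2 e2f unfolding filterlim_iff by fastforce
  have e3f: "eventually (\<lambda>r. ereal ((F (xb + r *\<^sub>R u) - F xb - r * real_of_ereal (clarke_dd F xb u)) / ((1/2) * r^2)) < ereal b) (at_right 0)"
    using Limsup_lessD b unfolding clarke_dd2_def by blast
  have e3: "eventually (\<lambda>k. ereal ((F (xb + t k *\<^sub>R u) - F xb) / s k) < ereal b) sequentially"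
    using tr e3f u0 unfolding filterlim_iff s_def by fastforce
  have Lw: "(\<lambda>k. L * norm (w k - v)) \<longlonglongrightarrow> L * norm (v - v)"
    by (intro tendsto_intros wv)
  have e1: "eventually (\<lambda>k. L * norm (w k - v) < c - a - b) sequentially"
    using order_tendstoD(2)[OF Lw, of "c - a - b"] ab by simp
  show ?thesis
    using e1 e2 e3 eyU ezU exU
  proof eventually_elim
    case (elim k)
    define y where "y = xb + t k *\<^sub>R u"
    define z where "z = y + s k *\<^sub>R v"
    define x where "x = y + s k *\<^sub>R w k"
    have 2: "F z - F y < s k * a" using elim(2) spos[of k]
      by (simp add: z_def y_def pos_divide_less_eq mult.commute)
    have 3: "F y - F xb < s k * b" using elim(3) spos[of k]
      by (simp add: y_def pos_divide_less_eq mult.commute)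
    have "dist (F x) (F z) \<le> L * dist x z"
      unfolding x_def z_def y_def by (rule lipschitz_onD[OF L]) (use elim(5,6) in auto)
    also have "dist x z = s k * norm (w k - v)"
      using spos[of k] by (simp add: x_def z_def dist_norm scaleR_diff_right[symmetric])
    finally have "F x - F z \<le> s k * (L * norm (w k - v))"
      by (simp add: dist_real_def algebra_simps)
    also have "\<dots> \<le> s k * (c - a - b)"
      using elim(1) spos[of k] by (intro mult_left_mono) auto
    finally have 1: "F x - F z \<le> s k * (c - a - b)" .
    have "F x - F xb \<le> s k * c" using 1 2 3 by (simp add: algebra_simps)
    then show ?case by (simp add: x_def y_def s_def mult.commute)
  qed
qed

lemma core_neg:
  fixes F :: "'a::real_normed_vector \<Rightarrow> real"
  assumes lip: "loc_lipschitz_at F xb" and tpos: "\<forall>k. t k > 0" and t0: "t \<longlonglongrightarrow> 0"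
    and wv: "w \<longlonglongrightarrow> v"
    and un: "clarke_dd F xb u < 0"
  shows "eventually (\<lambda>k. F (xb + t k *\<^sub>R u + ((1/2)*(t k)^2) *\<^sub>R w k) - F xb \<le> 0) sequentially"
proof -
  obtain U L where U: "open U" "xb \<in> U" and L: "L-lipschitz_on U F"
    using lip unfolding loc_lipschitz_at_def by blast
  obtain a where a: "clarke_dd F xb u < ereal a" and a0: "ereal a < 0"
    using ereal_dense2[OF un] by blast
  have a0': "a < 0" using a0 by simp
  define s where "s k = (1/2) * (t k)^2" for k
  have tp: "t k > 0" for k using tpos by blast
  have spos: "s k > 0" for k using tp[of k] by (simp add: s_def)
  have tr: "filterlim t (at_right 0) sequentially" using seq_facts tpos t0 by blast
  have sr: "filterlim s (at_right 0) sequentially" using seq_facts(2)[OF tpos t0] unfolding s_def .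
  have s0: "s \<longlonglongrightarrow> 0" using sr by (simp add: filterlim_at)
  have yk: "(\<lambda>k. xb + t k *\<^sub>R u) \<longlonglongrightarrow> xb"
    using tendsto_add[OF tendsto_const tendsto_scaleR[OF t0 tendsto_const], of xb u] by simp
  have xk: "(\<lambda>k. xb + t k *\<^sub>R u + s k *\<^sub>R w k) \<longlonglongrightarrow> xb"
    using tendsto_add[OF yk tendsto_scaleR[OF s0 wv]] by simp
  have eyU: "eventually (\<lambda>k. xb + t k *\<^sub>R u \<in> U) sequentially" using yk U topological_tendstoD by blast
  have exU: "eventually (\<lambda>k. xb + t k *\<^sub>R u + s k *\<^sub>R w k \<in> U) sequentially" using xk U topological_tendstoD by blast
  have e2f: "eventually (\<lambda>p. (F (fst p + snd p *\<^sub>R u) - F (fst p)) / snd p < a) (nhds xb \<times>\<^sub>F at_right 0)"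
    using Limsup_lessD[OF a[unfolded clarke_dd_def]] by (simp add: case_prod_beta)
  have fl2: "filterlim (\<lambda>k. (xb, t k)) (nhds xb \<times>\<^sub>F at_right 0) sequentially"
    by (rule filterlim_Pair[OF tendsto_const tr])
  have e2: "eventually (\<lambda>k. (F (xb + t k *\<^sub>R u) - F xb) / t k < a) sequentially"
    using fl2 e2f unfolding filterlim_iff by fastforce
  have Lw: "(\<lambda>k. L/2 * norm (w k) * t k) \<longlonglongrightarrow> L/2 * norm v * 0"
    by (intro tendsto_intros wv t0)
  have e1: "eventually (\<lambda>k. L/2 * norm (w k) * t k < - a) sequentially"
    using order_tendstoD(2)[OF Lw, of "- a"] a0' by simp
  show ?thesis
    using e1 e2 eyU exU
  proof eventually_elim
    case (elim k)
    define y where "y = xb + t k *\<^sub>R u"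
    define x where "x = y + s k *\<^sub>R w k"
    have 2: "F y - F xb < t k * a" using elim(2) tp[of k]
      by (simp add: y_def pos_divide_less_eq mult.commute)
    have "dist (F x) (F y) \<le> L * dist x y"
      unfolding x_def y_def by (rule lipschitz_onD[OF L]) (use elim(3,4) in auto)
    also have "dist x y = s k * norm (w k)"
      using spos[of k] by (simp add: x_def dist_norm)
    finally have "F x - F y \<le> L * (s k * norm (w k))"
      by (simp add: dist_real_def algebra_simps)
    also have "\<dots> = t k * (L/2 * norm (w k) * t k)" by (simp add: s_def power2_eq_square)
    also have "\<dots> \<le> t k * (- a)"
      using elim(1) tp[of k] by (intro mult_left_mono) auto
    finally have "F x - F xb \<le> 0" using 2 by (simp add: algebra_simps)
    then show ?case by (simp add: x_def y_def s_def)
  qed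
qed

lemma bound_le:
  fixes F :: "'a::real_normed_vector \<Rightarrow> real"
  assumes lip: "loc_lipschitz_at F xb" and tpos: "\<forall>k. t k > 0" and t0: "t \<longlonglongrightarrow> 0"
    and wv: "w \<longlonglongrightarrow> v"
    and lex: "lex_le (second_pair F xb u v) (0, 0)" and c: "c > 0"
  shows "eventually (\<lambda>k. F (xb + t k *\<^sub>R u + ((1/2)*(t k)^2) *\<^sub>R w k) - F xb \<le> c * (t k)^2) sequentially"
proof -
  have "clarke_dd F xb u < 0 \<or> (clarke_dd F xb u = 0 \<and> clarke_dd F xb v + clarke_dd2 F xb u \<le> 0)"
    using lex by (simp add: lex_le_def second_pair_def)
  then show ?thesis
  proof
    assume "clarke_dd F xb u < 0"
    from core_neg[OF lip tpos t0 wv this] show ?thesis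
      by (rule eventually_mono) (use c in \<open>simp add: order_trans[OF _ mult_nonneg_nonneg]\<close>)
  next
    assume h: "clarke_dd F xb u = 0 \<and> clarke_dd F xb v + clarke_dd2 F xb u \<le> 0"
    have "(0::ereal) < ereal (2*c)" using c by simp
    then have "clarke_dd F xb v + clarke_dd2 F xb u < ereal (2*c)" using h by (meson le_less_trans)
    from core[OF lip tpos t0 wv conjunct1[OF h] this] show ?thesis by simp
  qed
qed

lemma bound_lt:
  fixes F :: "'a::real_normed_vector \<Rightarrow> real"
  assumes lip: "loc_lipschitz_at F xb" and tpos: "\<forall>k. t k > 0" and t0: "t \<longlonglongrightarrow> 0"
    and wv: "w \<longlonglongrightarrow> v" and u0: "clarke_dd F xb u = 0"
    and lex: "lex_lt (second_pair F xb u v) (0, 0)"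
  shows "\<exists>c>0. eventually (\<lambda>k. F (xb + t k *\<^sub>R u + ((1/2)*(t k)^2) *\<^sub>R w k) - F xb \<le> - c * (t k)^2) sequentially"
proof -
  have "clarke_dd F xb v + clarke_dd2 F xb u < 0"
    using lex u0 by (simp add: lex_lt_def second_pair_def)
  then obtain c' where c1: "clarke_dd F xb v + clarke_dd2 F xb u < ereal c'" and c2: "ereal c' < 0"
    using ereal_dense2 by blast
  have "c' < 0" using c2 by simp
  then show ?thesis using core[OF lip tpos t0 wv u0 c1]
    by (intro exI[of _ "- c'/2"]) auto
qed

theorem theorem5p1:
  fixes f g :: "nat \<Rightarrow> 'a::banach \<Rightarrow> real" and p m :: nat and xb :: 'a
  assumes feas: "xb \<in> feasible_set m g"
    and lipf: "\<forall>i\<in>{1..p}. loc_lipschitz_at (f i) xb"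
    and lipg: "\<forall>j\<in>active_set m g xb. loc_lipschitz_at (g j) xb"
    and contg: "\<forall>j\<in>{1..m} - active_set m g xb. isCont (g j) xb"
    and geo: "local_geoffrion p f m g xb"
    and cq: "\<forall>u\<in>critical_dirs p f m g xb.
               L2_set p f m g xb u \<subseteq> T2_set (feasible_set m g) xb u"
  shows "\<not> (\<exists>u v. (\<forall>i\<in>{1..p}. lex_le (second_pair (f i) xb u v) (0, 0)) \<and>
              (\<exists>i\<in>active_obj p f xb u. lex_lt (second_pair (f i) xb u v) (0, 0)) \<and>
              (\<forall>j\<in>active_set m g xb. lex_le (second_pair (g j) xb u v) (0, 0)))"
  proof
  assume "\<exists>u v. (\<forall>i\<in>{1..p}. lex_le (second_pair (f i) xb u v) (0, 0)) \<and>
              (\<exists>i\<in>active_obj p f xb u. lex_lt (second_pair (f i) xb u v) (0, 0)) \<and>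
              (\<forall>j\<in>active_set m g xb. lex_le (second_pair (g j) xb u v) (0, 0))"
  then obtain u v i0 where fle: "\<forall>i\<in>{1..p}. lex_le (second_pair (f i) xb u v) (0, 0)"
    and i0: "i0 \<in> active_obj p f xb u" and ilt: "lex_lt (second_pair (f i0) xb u v) (0, 0)"
    and gle: "\<forall>j\<in>active_set m g xb. lex_le (second_pair (g j) xb u v) (0, 0)"
    by blast
  have i0p: "i0 \<in> {1..p}" and u0: "clarke_dd (f i0) xb u = 0"
    using i0 by (auto simp: active_obj_def)
  have crit: "u \<in> critical_dirs p f m g xb"
    unfolding critical_dirs_def
  proof (intro CollectI conjI)
    show "\<forall>i\<in>{1..p}. clarke_dd (f i) xb u \<le> 0"
      using fle by (auto simp: lex_le_def second_pair_def intro: less_imp_le)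
    show "\<exists>i\<in>{1..p}. clarke_dd (f i) xb u = 0" using i0p u0 by blast
    show "\<forall>j\<in>active_set m g xb. clarke_dd (g j) xb u \<le> 0"
      using gle by (auto simp: lex_le_def second_pair_def intro: less_imp_le)
  qed
  have "v \<in> L2_set p f m g xb u" by (simp add: L2_set_def fle gle)
  then have "v \<in> T2_set (feasible_set m g) xb u" using cq crit by blast
  then obtain t w where tpos: "\<forall>k. t k > 0" and t0: "t \<longlonglongrightarrow> 0" and wv: "w \<longlonglongrightarrow> v"
    and inQ: "\<forall>k. xb + t k *\<^sub>R u + ((1/2) * (t k)^2) *\<^sub>R w k \<in> feasible_set m g"
    unfolding T2_set_def by blast
  obtain U M where U: "open U" "xb \<in> U" and M: "M > 0"
    and geoB: "\<forall>i\<in>{1..p}. \<forall>x\<in>U \<inter> feasible_set m g. f i x < f i xb \<longrightarrow>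
        (\<exists>j\<in>{1..p}. f j x > f j xb \<and> (f i xb - f i x) / (f j x - f j xb) \<le> M)"
    using geo unfolding local_geoffrion_def by blast
  define x where "x k = xb + t k *\<^sub>R u + ((1/2) * (t k)^2) *\<^sub>R w k" for k
  obtain c where c: "c > 0"
    and ec: "eventually (\<lambda>k. f i0 (x k) - f i0 xb \<le> - c * (t k)^2) sequentially"
    using bound_lt[OF lipf[rule_format, OF i0p] tpos t0 wv u0 ilt] unfolding x_def by blast
  have cM: "c / (2*M) > 0" using c M by simp
  have eall: "eventually (\<lambda>k. \<forall>j\<in>{1..p}. f j (x k) - f j xb \<le> c / (2*M) * (t k)^2) sequentially"
    unfolding x_def
    by (rule eventually_ball_finite) (use bound_le[OF lipf[rule_format] tpos t0 wv fle[rule_format] cM] in auto)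
  have xk: "x \<longlonglongrightarrow> xb + 0 *\<^sub>R u + ((1/2) * 0^2) *\<^sub>R v"
    unfolding x_def by (intro tendsto_intros t0 wv)
  have exU: "eventually (\<lambda>k. x k \<in> U) sequentially"
    using xk U topological_tendstoD by fastforce
  obtain k where k1: "f i0 (x k) - f i0 xb \<le> - c * (t k)^2"
    and k2: "\<forall>j\<in>{1..p}. f j (x k) - f j xb \<le> c / (2*M) * (t k)^2" and k3: "x k \<in> U"
    using eventually_happens[OF eventually_conj[OF ec eventually_conj[OF eall exU]]] by auto
  have tk: "t k > 0" using tpos by blast
  have ct: "c * (t k)^2 > 0" using c tk by simp
  have "f i0 (x k) < f i0 xb" using k1 ct by linarith
  moreover have "x k \<in> U \<inter> feasible_set m g" using k3 inQ by (simp add: x_def)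
  ultimately obtain j where j: "j \<in> {1..p}" "f j (x k) > f j xb"
    and r: "(f i0 xb - f i0 (x k)) / (f j (x k) - f j xb) \<le> M"
    using geoB i0p by blast
  have "f i0 xb - f i0 (x k) \<le> M * (f j (x k) - f j xb)"
    using r j(2) by (simp add: pos_divide_le_eq mult.commute)
  also have "\<dots> \<le> M * (c / (2*M) * (t k)^2)"
    using k2 j(1) M by (intro mult_left_mono) auto
  also have "\<dots> = c * (t k)^2 / 2" using M by simp
  finally show False using k1 ct by linarith
qed

end
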